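(* Let $t>0$ be an integer. There is a constant $C_t$ such that the following holds. Let $G=(A\cup B,E,<)$ be a bipartite ordered graph with parts $A,B$ such that $A<B$. If there are no $t$-element subsets $A'\subseteq A$ and $B'\subseteq B$ such that every $a\in A'$ and $b\in B'$ form a double cherry in $G$, then $|E|\le C_t(|A|+|B|)$.
   Context: An ordered graph is a graph with a linear order on its vertices. $A<B$ means $a<b$ for all $a\in A$, $b\in B$. Two distinct vertices of an ordered graph form a double cherry if either they are adjacent, or they can be named $u,v$ so that there are vertices $u_1,u_2,v_1,v_2$ with $u_1<u<u_2<v_1<v<v_2$ and edges $(u,v_1),(u,v_2),(v,u_1),(v,u_2)$ in the graph. *)

theory Defs
  imports Complex_Main
begin

text \<open>An ordered graph: vertices are natural numbers (any finite linear order embeds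
  order-preservingly into nat), edges are 2-element sets of vertices.\<close>

definition adj :: "nat set set \<Rightarrow> nat \<Rightarrow> nat \<Rightarrow> bool" where
  "adj E x y \<longleftrightarrow> {x, y} \<in> E"

definition double_cherry_uv :: "nat set set \<Rightarrow> nat \<Rightarrow> nat \<Rightarrow> bool" where
  "double_cherry_uv E u v \<longleftrightarrow>
     (\<exists>u1 u2 v1 v2. u1 < u \<and> u < u2 \<and> u2 < v1 \<and> v1 < v \<and> v < v2 \<and>
        adj E u v1 \<and> adj E u v2 \<and> adj E v u1 \<and> adj E v u2)"

definition double_cherry :: "nat set set \<Rightarrow> nat \<Rightarrow> nat \<Rightarrow> bool" where
  "double_cherry E x y \<longleftrightarrow> x \<noteq> y \<and>
     (adj E x y \<or> double_cherry_uv E x y \<or> double_cherry_uv E y x)"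

definition bip_ordered_graph :: "nat set \<Rightarrow> nat set \<Rightarrow> nat set set \<Rightarrow> bool" where
  "bip_ordered_graph A B E \<longleftrightarrow> finite A \<and> finite B \<and>
     (\<forall>a\<in>A. \<forall>b\<in>B. a < b) \<and>
     (\<forall>e\<in>E. \<exists>a\<in>A. \<exists>b\<in>B. e = {a, b})"

end

theory Submission
  imports Defs
begin

definition cons :: "nat set \<Rightarrow> nat set \<Rightarrow> bool" where
  "cons S W \<longleftrightarrow> W \<subseteq> S \<and> (\<forall>s\<in>S. \<forall>u\<in>W. \<forall>v\<in>W. u \<le> s \<and> s \<le> v \<longrightarrow> s \<in> W)"

definition wins :: "nat \<Rightarrow> nat set \<Rightarrow> nat set set" where
  "wins t S = {W. card W = t \<and> cons S W}"

lemma wins_sub: "wins t S \<subseteq> Pow S" by (auto simp: wins_def cons_def)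

lemma finite_wins: "finite S \<Longrightarrow> finite (wins t S)"
  by (rule finite_subset[OF wins_sub]) simp

lemma win_facts: "W \<in> wins t S \<Longrightarrow> 0 < t \<Longrightarrow> finite W \<and> W \<noteq> {} \<and> W \<subseteq> S"
  by (auto simp: wins_def cons_def card_gt_0_iff)

lemma win_inj:
  assumes "0<t" "W1\<in>wins t S" "W2 \<in> wins t S" "Min W1 = Min W2"
  shows "W1 = W2"
proof -
  have key: "W1 \<subseteq> W2" if a: "W1\<in>wins t S" "W2\<in>wins t S" "Min W1 = Min W2" "Max W1 \<le> Max W2" for W1 W2
  proof
    fix x assume x: "x\<in>W1"
    from win_facts[OF a(1) assms(1)] have f1: "finite W1" "W1 \<noteq> {}" "W1 \<subseteq> S" by auto
    from win_facts[OF a(2) assms(1)] have f2: "finite W2" "W2 \<noteq> {}" "W2 \<subseteq> S" by auto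
    have m: "Min W2 \<le> x" using a(3) Min_le[OF f1(1) x] by simp
    have mx: "x \<le> Max W2" using a(4) Max_ge[OF f1(1) x] by simp
    have cs: "cons S W2" using a(2) by (simp add: wins_def)
    have xS: "x \<in> S" using x f1 by auto
    have i2: "Min W2 \<in> W2" "Max W2 \<in> W2" using f2 by auto
    show "x \<in> W2" using cs xS i2 m mx unfolding cons_def by blast
  qed
  have c: "card W1 = card W2" using assms by (simp add: wins_def)
  have f: "finite W1" "finite W2" using win_facts assms by blast+
  show ?thesis
  proof (cases "Max W1 \<le> Max W2")
    case True
    have "W1 \<subseteq> W2" using key[OF assms(2,3,4) True] .
    then show ?thesis using card_subset_eq[OF f(2) _ c] by blast
  next
    case False
    have "W2 \<subseteq> W1" using key[OF assms(3,2) assms(4)[symmetric]] False by simp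
    then show ?thesis using card_subset_eq[OF f(1) _ c[symmetric]] by blast
  qed
qed

lemma wins_card_le: "finite S \<Longrightarrow> 0<t \<Longrightarrow> card (wins t S) \<le> card S"
proof -
  assume fs: "finite S" and t: "0<t"
  have "inj_on Min (wins t S)" by (rule inj_onI) (rule win_inj[OF t], auto)
  moreover have "Min ` wins t S \<subseteq> S"
  proof
    fix m assume "m \<in> Min ` wins t S"
    then obtain W where W: "W \<in> wins t S" "m = Min W" by auto
    moreover have "finite W" "W \<noteq> {}" "W \<subseteq> S" using win_facts[OF W(1) t] by auto
    ultimately show "m \<in> S" using Min_in[of W] by (metis subsetD)
  qed
  ultimately show ?thesis by (rule card_inj_on_le[OF _ _ fs])
qed

lemma wins_cover_le:
  assumes fs: "finite S" and t: "0<t"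
  shows "card {W\<in>wins t S. Min W \<le> c \<and> c \<le> Max W} \<le> t"
proof -
  let ?U = "{u\<in>S. u \<le> c \<and> card (S \<inter> {u..c}) \<le> t}"
  have fU: "finite ?U" using fs by simp
  have cU: "card ?U \<le> t"
  proof (cases "?U = {}")
    case True then show ?thesis by (subst True) simp
  next
    case False
    define u0 where "u0 = Min ?U"
    have u0: "u0 \<in> ?U" using False fU u0_def Min_in by blast
    have "?U \<subseteq> S \<inter> {u0..c}" using fU u0_def by auto
    hence "card ?U \<le> card (S \<inter> {u0..c})" using fs by (intro card_mono) auto
    then show ?thesis using u0 by simp
  qed
  have "inj_on Min {W\<in>wins t S. Min W \<le> c \<and> c \<le> Max W}"
    by (rule inj_onI) (rule win_inj[OF t], auto)
  moreover have "Min ` {W\<in>wins t S. Min W \<le> c \<and> c \<le> Max W} \<subseteq> ?U"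
  proof
    fix m assume "m \<in> Min ` {W\<in>wins t S. Min W \<le> c \<and> c \<le> Max W}"
    then obtain W where W: "W \<in> wins t S" "Min W \<le> c" "c \<le> Max W" "m = Min W" by auto
    from win_facts[OF W(1) t] have f: "finite W" "W \<noteq> {}" "W \<subseteq> S" by auto
    have cW: "cons S W" "card W = t" using W(1) by (auto simp: wins_def)
    have i2: "Min W \<in> W" "Max W \<in> W" using f Min_in Max_in by auto
    have "S \<inter> {Min W..c} \<subseteq> W"
    proof
      fix s assume s: "s \<in> S \<inter> {Min W..c}"
      then have "s \<in> S" "Min W \<le> s" "s \<le> Max W" using W(3) by auto
      then show "s \<in> W" using cW(1) i2 unfolding cons_def by blast
    qed
    hence cc: "card (S \<inter> {Min W..c}) \<le> t" using card_mono[OF f(1)] cW(2) by metis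
    have "Min W \<in> S" using i2 f(3) by blast
    then show "m \<in> ?U" using W(2,4) cc by simp
  qed
  ultimately have "card {W\<in>wins t S. Min W \<le> c \<and> c \<le> Max W} \<le> card ?U"
    by (rule card_inj_on_le[OF _ _ fU])
  with cU show ?thesis by simp
qed

lemma upper_exists: assumes "finite (S::nat set)" shows "\<forall>t. 0<t \<and> t \<le> card S \<longrightarrow> (\<exists>c. card {s\<in>S. c \<le> s} = t)"
  using assms
proof (induct S rule: finite_linorder_max_induct)
  case empty then show ?case by simp
next
  case (insert b A)
  have bA: "b \<notin> A" using insert by auto
  show ?case
  proof (intro allI impI)
    fix t assume t: "0<t \<and> t \<le> card (insert b A)"
    show "\<exists>c. card {s\<in>insert b A. c \<le> s} = t"
    proof (cases "t = 1")
      case True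
      have "{s\<in>insert b A. b \<le> s} = {b}" using insert by auto
      then show ?thesis using True by (intro exI[of _ b]) simp
    next
      case False
      have "t \<le> Suc (card A)" using t bA insert(1) by simp
      then have "0 < t - 1 \<and> t - 1 \<le> card A" using t False by arith
      then obtain c where c: "card {s\<in>A. c \<le> s} = t - 1" using insert by blast
      have "card {s\<in>A. c \<le> s} \<noteq> 0" using c t False by arith
      then have "{s\<in>A. c \<le> s} \<noteq> {}" by (metis card.empty)
      then obtain s where "s \<in> A" "c \<le> s" by auto
      hence "c \<le> b" using insert by fastforce
      hence "{s\<in>insert b A. c \<le> s} = insert b {s\<in>A. c \<le> s}" by auto
      hence "card {s\<in>insert b A. c \<le> s} = Suc (t - 1)" using c bA insert by simp
      then show ?thesis using t by (intro exI[of _ c]) simp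
    qed
  qed
qed

lemma wins_lower: assumes "finite S" "0<t" shows "card S \<le> (t-1) + card (wins t S)"
  using assms
proof (induction rule: finite_linorder_max_induct)
  case empty then show ?case by simp
next
  case (insert b A)
  have bA: "b \<notin> A" using insert by auto
  have cS: "card (insert b A) = Suc (card A)" using bA insert by simp
  show ?case
  proof (cases "card (insert b A) \<le> t - 1")
    case True then show ?thesis by simp
  next
    case False
    then have "0<t \<and> t \<le> card (insert b A)" using insert by simp
    then obtain c where c: "card {s\<in>insert b A. c \<le> s} = t"
      using upper_exists[of "insert b A"] insert by auto
    let ?U = "{s\<in>insert b A. c \<le> s}"
    have "card ?U > 0" using c insert.prems by simp
    then have "?U \<noteq> {}" by (metis card.empty less_irrefl)
    then obtain s where "s \<in> insert b A" "c \<le> s" by auto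
    hence "c \<le> b" using insert by fastforce
    hence bU: "b \<in> ?U" by simp
    have U: "?U \<in> wins t (insert b A)" using c by (auto simp: wins_def cons_def)
    have notU: "?U \<notin> wins t A" using bU bA by (auto simp: wins_def cons_def)
    have sub: "wins t A \<subseteq> wins t (insert b A)"
    proof
      fix W assume W: "W \<in> wins t A"
      then have "cons A W" "card W = t" by (auto simp: wins_def)
      then show "W \<in> wins t (insert b A)" using insert(2)
        unfolding wins_def cons_def by (auto, meson less_le_not_le subsetD)
    qed
    have "insert ?U (wins t A) \<subseteq> wins t (insert b A)" using U sub by blast
    hence "card (insert ?U (wins t A)) \<le> card (wins t (insert b A))"
      using finite_wins insert by (meson card_mono finite_insert)
    hence "Suc (card (wins t A)) \<le> card (wins t (insert b A))"
      using notU finite_wins insert by simp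
    then show ?thesis using insert cS by simp
  qed
qed

lemma charge:
  fixes A0 :: "nat set" and L R :: "nat \<Rightarrow> nat"
  assumes Lst: "Lst = (\<lambda>x. {a\<in>A0. L a \<le> x \<and> x \<le> R a})"
    and t: "0<t" and W: "W \<in> wins t (Lst x)"
  shows "W \<in> wins t (Lst 0) \<union> (\<Union>w\<in>A0. {W\<in>wins t (Lst (L w)). Min W \<le> w \<and> w \<le> Max W})
           \<union> (\<Union>s\<in>A0. {W\<in>wins t (Lst (Suc (R s))). Min W \<le> s \<and> s \<le> Max W})"
proof -
  define x0 where "x0 = (LEAST x. W \<in> wins t (Lst x))"
  have W0: "W \<in> wins t (Lst x0)" unfolding x0_def by (rule LeastI[of _ x]) (rule W)
  have fW: "finite W" "W \<noteq> {}" using win_facts[OF W0 t] by auto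
  have cW: "card W = t" "cons (Lst x0) W" using W0 by (auto simp: wins_def)
  show ?thesis
  proof (cases x0)
    case 0 then show ?thesis using W0 by simp
  next
    case (Suc y)
    have "\<not> (W \<in> wins t (Lst y))" using not_less_Least[of y "\<lambda>x. W \<in> wins t (Lst x)"] x0_def Suc by auto
    hence nc: "\<not> cons (Lst y) W" using cW by (auto simp: wins_def)
    have mm: "Min W \<le> z" "z \<le> Max W" if "z \<in> W" for z using fW that by auto
    from nc consider (a) "\<not> W \<subseteq> Lst y" | (b) s u v where "s\<in>Lst y" "u\<in>W" "v\<in>W" "u\<le>s" "s\<le>v" "s\<notin>W"
      unfolding cons_def by blast
    then show ?thesis
    proof cases
      case a
      then obtain w where w: "w\<in>W" "w\<notin>Lst y" by auto
      with cW have "w\<in> Lst x0" by (auto simp: cons_def)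
      hence "w\<in>A0" "L w = x0" using w(2) Suc by (auto simp: Lst)
      then show ?thesis using W0 mm[OF w(1)] by blast
    next
      case b
      have "s \<notin> Lst x0"
      proof
        assume "s \<in> Lst x0"
        then have "s \<in> W" using cW(2) b unfolding cons_def by blast
        with b show False by simp
      qed
      hence "s\<in>A0" "Suc (R s) = x0" using b(1) Suc by (auto simp: Lst)
      moreover have "Min W \<le> s" "s \<le> Max W" using mm[OF b(2)] mm[OF b(3)] b(4,5) by auto
      ultimately show ?thesis using W0 by blast
    qed
  qed
qed

lemma Q_card:
  fixes A0 :: "nat set" and L R :: "nat \<Rightarrow> nat"
  assumes Lst: "Lst = (\<lambda>x. {a\<in>A0. L a \<le> x \<and> x \<le> R a})"
    and t: "0<t" and fA: "finite A0"
  shows "card (wins t (Lst 0) \<union> (\<Union>w\<in>A0. {W\<in>wins t (Lst (L w)). Min W \<le> w \<and> w \<le> Max W})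
           \<union> (\<Union>s\<in>A0. {W\<in>wins t (Lst (Suc (R s))). Min W \<le> s \<and> s \<le> Max W}))
         \<le> card A0 + t * card A0 + t * card A0"
proof -
  have fL: "finite (Lst x)" for x using fA Lst by simp
  have c1: "card (wins t (Lst 0)) \<le> card A0"
    using wins_card_le[OF fL t, of 0] card_mono[OF fA, of "Lst 0"] Lst by auto
  have c2: "card (\<Union>w\<in>A0. {W\<in>wins t (Lst (L w)). Min W \<le> w \<and> w \<le> Max W}) \<le> t * card A0"
  proof -
    have "card (\<Union>w\<in>A0. {W\<in>wins t (Lst (L w)). Min W \<le> w \<and> w \<le> Max W})
       \<le> (\<Sum>w\<in>A0. card {W\<in>wins t (Lst (L w)). Min W \<le> w \<and> w \<le> Max W})" by (rule card_UN_le[OF fA])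
    also have "\<dots> \<le> (\<Sum>w\<in>A0. t)" by (rule sum_mono) (rule wins_cover_le[OF fL t])
    finally show ?thesis by (simp add: mult.commute)
  qed
  have c3: "card (\<Union>w\<in>A0. {W\<in>wins t (Lst (Suc (R w))). Min W \<le> w \<and> w \<le> Max W}) \<le> t * card A0"
  proof -
    have "card (\<Union>w\<in>A0. {W\<in>wins t (Lst (Suc (R w))). Min W \<le> w \<and> w \<le> Max W})
       \<le> (\<Sum>w\<in>A0. card {W\<in>wins t (Lst (Suc (R w))). Min W \<le> w \<and> w \<le> Max W})" by (rule card_UN_le[OF fA])
    also have "\<dots> \<le> (\<Sum>w\<in>A0. t)" by (rule sum_mono) (rule wins_cover_le[OF fL t])
    finally show ?thesis by (simp add: mult.commute)
  qed
  show ?thesis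
    by (rule le_trans[OF card_Un_le]) (rule add_mono[OF le_trans[OF card_Un_le] c3], rule add_mono[OF c1 c2])
qed

theorem corollary3p2:
  fixes t :: nat
  assumes "t > 0"
  shows "\<exists>C::real. \<forall>A B E. bip_ordered_graph A B E \<longrightarrow>
           \<not> (\<exists>A' B'. A' \<subseteq> A \<and> B' \<subseteq> B \<and> card A' = t \<and> card B' = t \<and>
                 (\<forall>a\<in>A'. \<forall>b\<in>B'. double_cherry E a b)) \<longrightarrow>
           real (card E) \<le> C * real (card A + card B)"
proof (rule exI[of _ "real (t * (2*t+1))"], intro allI impI)
  fix A B E
  assume G: "bip_ordered_graph A B E"
    and noK: "\<not> (\<exists>A' B'. A' \<subseteq> A \<and> B' \<subseteq> B \<and> card A' = t \<and> card B' = t \<and>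
                 (\<forall>a\<in>A'. \<forall>b\<in>B'. double_cherry E a b))"
  have t: "0 < t" using assms .
  have fA: "finite A" and fB: "finite B" and AB: "\<forall>a\<in>A. \<forall>b\<in>B. a<b"
    and Ed: "\<forall>e\<in>E. \<exists>a\<in>A. \<exists>b\<in>B. e={a,b}" using G unfolding bip_ordered_graph_def by auto
  define nb where "nb a = {b\<in>B. {a,b}\<in>E}" for a
  define N where "N b = {a\<in>A. {a,b} \<in> E}" for b
  define A0 where "A0 = {a\<in>A. nb a \<noteq> {}}"
  define L where "L a = Min (nb a)" for a
  define R where "R a = Max (nb a)" for a
  define Lst where "Lst = (\<lambda>x. {a\<in>A0. L a \<le> x \<and> x \<le> R a})"
  define S where "S b = (if N b = {} then {} else {a\<in>Lst b. Min (N b) \<le> a \<and> a \<le> Max (N b)})" for b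
  define Win where "Win = (\<Union>b\<in>B. wins t (S b))"
  have fnb: "finite (nb a)" for a using fB by (simp add: nb_def)
  have fN: "finite (N b)" for b using fA by (simp add: N_def)
  have fA0: "finite A0" using fA by (simp add: A0_def)
  have A0A: "A0 \<subseteq> A" by (auto simp: A0_def)
  have SA: "S b \<subseteq> A0" for b by (auto simp: S_def Lst_def)
  have fS: "finite (S b)" for b using SA fA0 finite_subset by blast
  have NS: "N b \<subseteq> S b" if b: "b\<in>B" for b
  proof
    fix a assume a: "a \<in> N b"
    then have aA: "a\<in>A" and e: "{a,b}\<in>E" by (auto simp: N_def)
    have bn: "b \<in> nb a" using b e by (simp add: nb_def)
    hence "a \<in> A0" using aA by (auto simp: A0_def)
    moreover have "L a \<le> b" "b \<le> R a" using bn fnb by (auto simp: L_def R_def)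
    moreover have "Min (N b) \<le> a" "a \<le> Max (N b)" using a fN by auto
    moreover have "N b \<noteq> {}" using a by auto
    ultimately show "a \<in> S b" by (simp add: S_def Lst_def)
  qed
  have dc: "double_cherry E a b" if b: "b\<in>B" and a: "a \<in> S b" for a b
  proof -
    have Nne: "N b \<noteq> {}" using a by (auto simp: S_def split: if_splits)
    have aS: "a \<in> A0" "L a \<le> b" "b \<le> R a" "Min (N b) \<le> a" "a \<le> Max (N b)"
      using a Nne by (auto simp: S_def Lst_def)
    have aA: "a \<in> A" and nbne: "nb a \<noteq> {}" using aS(1) by (auto simp: A0_def)
    have ab: "a < b" using AB aA b by auto
    have Li: "L a \<in> nb a" and Ri: "R a \<in> nb a" using nbne fnb by (auto simp: L_def R_def)
    have Ti: "Min (N b) \<in> N b" and Di: "Max (N b) \<in> N b" using Nne fN by auto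
    have e1: "{a, L a} \<in> E" "{a, R a} \<in> E" "L a \<in> B" using Li Ri by (auto simp: nb_def)
    have e2: "{Min (N b), b} \<in> E" "{Max (N b), b} \<in> E" "Max (N b) \<in> A" using Ti Di by (auto simp: N_def)
    have e2': "{b, Min (N b)} \<in> E" "{b, Max (N b)} \<in> E" using e2 by (auto simp: insert_commute)
    show ?thesis
    proof (cases "b = L a \<or> b = R a \<or> a = Min (N b) \<or> a = Max (N b)")
      case True
      then have "adj E a b" using e1 e2 by (auto simp: adj_def)
      then show ?thesis using ab by (auto simp: double_cherry_def)
    next
      case False
      have lt: "Min (N b) < a" "a < Max (N b)" "L a < b" "b < R a" using False aS by auto
      have "Max (N b) < L a" using AB e1(3) e2(3) by auto
      then have "double_cherry_uv E a b" unfolding double_cherry_uv_def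
        using lt e1 e2' by (intro exI[of _ "Min (N b)"] exI[of _ "Max (N b)"] exI[of _ "L a"] exI[of _ "R a"])
          (auto simp: adj_def)
      then show ?thesis using ab by (auto simp: double_cherry_def)
    qed
  qed
  have fWin: "finite Win" unfolding Win_def using fB finite_wins fS by blast
  have cnt_b: "card {b\<in>B. W\<in>wins t (S b)} \<le> t - 1" if W: "W \<in> Win" for W
  proof (rule ccontr)
    assume "\<not> card {b\<in>B. W\<in>wins t (S b)} \<le> t - 1"
    then have "t \<le> card {b\<in>B. W\<in>wins t (S b)}" by simp
    then obtain B' where B': "B' \<subseteq> {b\<in>B. W\<in>wins t (S b)}" "card B' = t"
      by (meson obtain_subset_with_card_n)
    from W obtain b0 where b0: "b0 \<in> B" "W \<in> wins t (S b0)" by (auto simp: Win_def)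
    have WA: "W \<subseteq> A" using win_facts[OF b0(2) t] SA A0A by blast
    have cW: "card W = t" using b0(2) by (simp add: wins_def)
    have "\<forall>a\<in>W. \<forall>b\<in>B'. double_cherry E a b"
    proof (intro ballI)
      fix a b assume a: "a\<in>W" and bB: "b\<in>B'"
      then have "b \<in> B" "W \<in> wins t (S b)" using B' by auto
      then show "double_cherry E a b" using dc win_facts[OF _ t] a by blast
    qed
    then show False using noK WA B' cW by blast
  qed
  have WinQ: "Win \<subseteq> wins t (Lst 0) \<union> (\<Union>w\<in>A0. {W\<in>wins t (Lst (L w)). Min W \<le> w \<and> w \<le> Max W})
           \<union> (\<Union>s\<in>A0. {W\<in>wins t (Lst (Suc (R s))). Min W \<le> s \<and> s \<le> Max W})"
  proof
    fix W assume "W \<in> Win"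
    then obtain b where b: "b\<in>B" "W \<in> wins t (S b)" by (auto simp: Win_def)
    have fw: "finite W" "W \<noteq> {}" "W \<subseteq> S b" using win_facts[OF b(2) t] by auto
    have Nne: "N b \<noteq> {}" using fw by (auto simp: S_def split: if_splits)
    have Sb: "S b = {a\<in>Lst b. Min (N b) \<le> a \<and> a \<le> Max (N b)}" using Nne by (simp add: S_def)
    have cS: "cons (S b) W" "card W = t" using b(2) by (auto simp: wins_def)
    have "cons (Lst b) W"
      unfolding cons_def
    proof (intro conjI ballI impI)
      show "W \<subseteq> Lst b" using fw Sb by auto
      fix s u v assume s: "s \<in> Lst b" and u: "u \<in> W" and v: "v \<in> W" and uv: "u \<le> s \<and> s \<le> v"
      have "Min (N b) \<le> u" "v \<le> Max (N b)" using u v fw Sb by auto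
      then have "s \<in> S b" using s uv Sb by auto
      then show "s \<in> W" using cS(1) u v uv unfolding cons_def by blast
    qed
    then have "W \<in> wins t (Lst b)" using cS by (simp add: wins_def)
    then show "W \<in> wins t (Lst 0) \<union> (\<Union>w\<in>A0. {W\<in>wins t (Lst (L w)). Min W \<le> w \<and> w \<le> Max W})
           \<union> (\<Union>s\<in>A0. {W\<in>wins t (Lst (Suc (R s))). Min W \<le> s \<and> s \<le> Max W})"
      by (rule charge[OF Lst_def t])
  qed
  have cWin: "card Win \<le> (2*t+1) * card A"
  proof -
    have "card Win \<le> card A0 + t * card A0 + t * card A0"
      by (rule le_trans[OF card_mono[OF _ WinQ] Q_card[OF Lst_def t fA0]])
        (use fA0 Lst_def finite_wins in auto)
    also have "\<dots> = (2*t+1) * card A0" by simp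
    also have "\<dots> \<le> (2*t+1) * card A" using card_mono[OF fA A0A] by (rule mult_le_mono2)
    finally show ?thesis .
  qed
  have E1: "card E \<le> (\<Sum>b\<in>B. card (N b))"
  proof -
    have "E \<subseteq> (\<Union>b\<in>B. (\<lambda>a. {a,b}) ` N b)"
    proof
      fix e assume "e \<in> E"
      with Ed obtain a b where "a\<in>A" "b\<in>B" "e = {a,b}" by blast
      with \<open>e\<in>E\<close> show "e \<in> (\<Union>b\<in>B. (\<lambda>a. {a,b}) ` N b)" by (auto simp: N_def)
    qed
    hence "card E \<le> card (\<Union>b\<in>B. (\<lambda>a. {a,b}) ` N b)"
      by (rule card_mono[rotated]) (use fB fN in auto)
    also have "\<dots> \<le> (\<Sum>b\<in>B. card ((\<lambda>a. {a,b}) ` N b))" by (rule card_UN_le[OF fB])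
    also have "\<dots> \<le> (\<Sum>b\<in>B. card (N b))" by (rule sum_mono) (rule card_image_le[OF fN])
    finally show ?thesis .
  qed
  have E2: "(\<Sum>b\<in>B. card (N b)) \<le> (\<Sum>b\<in>B. (t - 1) + card (wins t (S b)))"
  proof (rule sum_mono)
    fix b assume b: "b \<in> B"
    have "card (N b) \<le> card (S b)" by (rule card_mono[OF fS NS[OF b]])
    also have "\<dots> \<le> (t-1) + card (wins t (S b))" by (rule wins_lower[OF fS t])
    finally show "card (N b) \<le> (t - 1) + card (wins t (S b))" .
  qed
  have E3: "(\<Sum>b\<in>B. card (wins t (S b))) = (\<Sum>W\<in>Win. card {b\<in>B. W\<in>wins t (S b)})"
  proof -
    have "(\<Sum>b\<in>B. card (wins t (S b))) = (\<Sum>b\<in>B. \<Sum>W\<in>Win. if W \<in> wins t (S b) then 1 else 0)"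
    proof (rule sum.cong[OF refl])
      fix b assume b: "b\<in>B"
      have "{W\<in>Win. W \<in> wins t (S b)} = wins t (S b)" using b by (auto simp: Win_def)
      then have "card (wins t (S b)) = card {W\<in>Win. W \<in> wins t (S b)}" by simp
      also have "\<dots> = (\<Sum>W\<in>Win. if W \<in> wins t (S b) then 1 else 0)"
        using sum.inter_filter[OF fWin, of "\<lambda>_. (1::nat)"] by simp
      finally show "card (wins t (S b)) = (\<Sum>W\<in>Win. if W \<in> wins t (S b) then 1 else 0)" .
    qed
    also have "\<dots> = (\<Sum>W\<in>Win. \<Sum>b\<in>B. if W \<in> wins t (S b) then 1 else 0)" by (rule sum.swap)
    also have "\<dots> = (\<Sum>W\<in>Win. card {b\<in>B. W\<in>wins t (S b)})"
      using sum.inter_filter[OF fB, of "\<lambda>_. (1::nat)"] by simp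
    finally show ?thesis .
  qed
  have E4: "(\<Sum>W\<in>Win. card {b\<in>B. W\<in>wins t (S b)}) \<le> (t - 1) * card Win"
  proof -
    have "(\<Sum>W\<in>Win. card {b\<in>B. W\<in>wins t (S b)}) \<le> (\<Sum>W\<in>Win. t - 1)"
      by (rule sum_mono) (rule cnt_b)
    then show ?thesis by (simp add: mult.commute)
  qed
  have "card E \<le> (t - 1) * card B + (t - 1) * card Win"
    using E1 E2 E3 E4 by (simp add: sum.distrib mult.commute)
  also have "\<dots> \<le> t * card B + t * ((2*t+1) * card A)"
    using cWin by (intro add_mono mult_mono) auto
  also have "\<dots> \<le> (t * (2*t+1)) * (card A + card B)"
    by (simp add: algebra_simps)
  finally have "card E \<le> (t * (2*t+1)) * (card A + card B)" .
  then show "real (card E) \<le> real (t * (2*t+1)) * real (card A + card B)"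
    by (metis of_nat_le_iff of_nat_mult)
qed

end
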